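(* Let $A,B$ be Pareto sets of size $n$ each, sorted lexicographically, and let $k$ be the size of their Pareto sum. The Successive Binary Search algorithm computes the Pareto sum of $A$ and $B$ in $\mathcal{O}(nk\log n)$ time using $\mathcal{O}(n+k)$ space.
   Context: For $p,p'\in\mathbb{R}^2$, $p$ dominates $p'$ if $p\neq p'$, $p.x\le p'.x$ and $p.y\le p'.y$. A Pareto set is a set $S\subset\mathbb{R}^2$ in which no point dominates another; $S_i$ denotes its element of rank $i$ in lexicographic order. The Minkowski matrix is $M_{ij}=A_i+B_j$ (computed on demand); each column is a sorted Pareto set. The Pareto sum $C$ is the set of entries of $M$ not dominated by any entry of $M$. A range-minimum oracle, given $[x_{\min},x_{\max})\times[y_{\min},y_{\max})$, returns the lexicographically smallest entry of $M$ in that range (or reports none). The successive algorithm: set $C=\{M_{11},M_{nn}\}$, $x_{\min}=M_{11}.x$, $x_{\max}=M_{nn}.x$, $y_{\min}=M_{nn}.y$, $y_{\max}=M_{11}.y$; repeatedly query the oracle; if it returns a point $m$, add $m$ to $C$ and set $x_{\min}=m.x$, $y_{\max}=m.y$; otherwise stop. In Successive Binary Search the oracle is implemented as follows: in each column, binary searches find the first row $f_x$ with $x$-coordinate $\ge x_{\min}$, the last row $l_x$ with $x$-coordinate $<x_{\max}$, the first row $f_y$ with $y$-coordinate $<y_{\max}$ and the last row $l_y$ with $y$-coordinate $\ge y_{\min}$; if $[f_x,l_x]\cap[f_y,l_y]\neq\emptyset$, the entry in row $\max(f_x,f_y)$ is that column's candidate; the oracle returns the lexicographically smallest candidate over all columns.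 *)

theory Defs
  imports Complex_Main
begin

type_synonym point = "real \<times> real"

definition dominates :: "point \<Rightarrow> point \<Rightarrow> bool" where
  "dominates p q \<longleftrightarrow> p \<noteq> q \<and> fst p \<le> fst q \<and> snd p \<le> snd q"

definition pareto_set :: "point set \<Rightarrow> bool" where
  "pareto_set S \<longleftrightarrow> (\<forall>p\<in>S. \<forall>q\<in>S. \<not> dominates p q)"

definition lex_less :: "point \<Rightarrow> point \<Rightarrow> bool" where
  "lex_less p q \<longleftrightarrow> fst p < fst q \<or> (fst p = fst q \<and> snd p < snd q)"

text \<open>A Pareto set given as the list of its elements in lexicographic order
  (element of rank i+1 is at list index i).\<close>
definition sorted_pareto :: "point list \<Rightarrow> bool" where
  "sorted_pareto A \<longleftrightarrow> pareto_set (set A) \<and> sorted_wrt lex_less A"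

definition padd :: "point \<Rightarrow> point \<Rightarrow> point" where
  "padd p q = (fst p + fst q, snd p + snd q)"

text \<open>Minkowski matrix, 0-based: entry (i,j) is A_i + B_j.\<close>
definition mink :: "point list \<Rightarrow> point list \<Rightarrow> nat \<Rightarrow> nat \<Rightarrow> point" where
  "mink A B i j = padd (A ! i) (B ! j)"

definition mink_entries :: "point list \<Rightarrow> point list \<Rightarrow> point set" where
  "mink_entries A B = {mink A B i j | i j. i < length A \<and> j < length B}"

definition pareto_sum :: "point list \<Rightarrow> point list \<Rightarrow> point set" where
  "pareto_sum A B = {m \<in> mink_entries A B. \<not> (\<exists>m'\<in>mink_entries A B. dominates m' m)}"

text \<open>bs_first P lo hi: binary search for the first index in [lo,hi) satisfying the
  (monotone) predicate P, returning hi if there is none; the second component is the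
  number of predicate evaluations (unit-cost comparisons) performed.\<close>
function bs_first :: "(nat \<Rightarrow> bool) \<Rightarrow> nat \<Rightarrow> nat \<Rightarrow> nat \<times> nat" where
  "bs_first P lo hi =
     (if lo < hi then
        (let mid = (lo + hi) div 2 in
         if P mid then (let (r, c) = bs_first P lo mid in (r, Suc c))
         else (let (r, c) = bs_first P (Suc mid) hi in (r, Suc c)))
      else (lo, 0))"
  by pat_completeness auto
termination
  by (relation "measure (\<lambda>(P, lo, hi). hi - lo)") auto

text \<open>Per-column query (column j of M, rows 0..n-1) for the range
  [xmin,xmax) x [ymin,ymax).  fx = first row with x >= xmin, ex = first row with
  x >= xmax (so l_x = ex - 1), fy = first row with y < ymax, ey = first row with
  y < ymin (so l_y = ey - 1).  [fx,l_x] and [fy,l_y] intersect iff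
  max fx fy < min ex ey; then the candidate is the entry in row max fx fy.
  Returns the candidate and the number of unit operations used.\<close>
definition column_query ::
  "point list \<Rightarrow> point list \<Rightarrow> real \<Rightarrow> real \<Rightarrow> real \<Rightarrow> real \<Rightarrow> nat \<Rightarrow> point option \<times> nat" where
  "column_query A B xmin xmax ymin ymax j =
     (let n = length A;
          col = (\<lambda>i. mink A B i j);
          (fx, c1) = bs_first (\<lambda>i. fst (col i) \<ge> xmin) 0 n;
          (ex, c2) = bs_first (\<lambda>i. fst (col i) \<ge> xmax) 0 n;
          (fy, c3) = bs_first (\<lambda>i. snd (col i) < ymax) 0 n;
          (ey, c4) = bs_first (\<lambda>i. snd (col i) < ymin) 0 n
      in (if max fx fy < min ex ey then Some (col (max fx fy)) else None,
          c1 + c2 + c3 + c4 + 1))"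

definition lex_min_opt :: "point option \<Rightarrow> point option \<Rightarrow> point option" where
  "lex_min_opt a b = (case a of None \<Rightarrow> b | Some p \<Rightarrow>
     (case b of None \<Rightarrow> Some p | Some q \<Rightarrow> Some (if lex_less q p then q else p)))"

definition range_min_query ::
  "point list \<Rightarrow> point list \<Rightarrow> real \<Rightarrow> real \<Rightarrow> real \<Rightarrow> real \<Rightarrow> point option \<times> nat" where
  "range_min_query A B xmin xmax ymin ymax =
     foldl (\<lambda>(best, c) j. let (cand, c') = column_query A B xmin xmax ymin ymax j
                          in (lex_min_opt best cand, c + c' + 1))
           (None, 0) [0..<length B]"

record sbs_state =
  out :: "point list"
  cur_xmin :: real
  cur_ymax :: real
  halted :: bool
  time :: nat

definition sbs_init :: "point list \<Rightarrow> point list \<Rightarrow> sbs_state" where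
  "sbs_init A B =
     (let m11 = mink A B 0 0; mnn = mink A B (length A - 1) (length B - 1) in
      \<lparr> out = [m11, mnn], cur_xmin = fst m11, cur_ymax = snd m11,
        halted = False, time = 1 \<rparr>)"

definition sbs_step :: "point list \<Rightarrow> point list \<Rightarrow> sbs_state \<Rightarrow> sbs_state" where
  "sbs_step A B s =
     (if halted s then s else
      (let mnn = mink A B (length A - 1) (length B - 1);
           (r, c) = range_min_query A B (cur_xmin s) (fst mnn) (snd mnn) (cur_ymax s)
       in case r of
            None \<Rightarrow> s\<lparr> halted := True, time := time s + c + 1 \<rparr>
          | Some m \<Rightarrow> s\<lparr> out := out s @ [m], cur_xmin := fst m, cur_ymax := snd m,
                         time := time s + c + 1 \<rparr>))"

definition sbs_run :: "point list \<Rightarrow> point list \<Rightarrow> nat \<Rightarrow> sbs_state" where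
  "sbs_run A B t = (sbs_step A B ^^ t) (sbs_init A B)"

text \<open>Space of a state (in stored points/numbers): the inputs A and B, the output
  list C, and a constant number of scalars (xmin, ymax, flags, counters and the
  O(1) working memory of the column-by-column range_min_query).  The Minkowski matrix is
  never stored.\<close>
definition sbs_space :: "point list \<Rightarrow> point list \<Rightarrow> sbs_state \<Rightarrow> nat" where
  "sbs_space A B s = length A + length B + length (out s) + 16"

end

theory Submission
  imports Defs
begin
declare bs_first.simps[simp del]

lemma bs_first_spec:
  assumes "\<And>i j. lo \<le> i \<Longrightarrow> i \<le> j \<Longrightarrow> j < hi \<Longrightarrow> P i \<Longrightarrow> P j"
  shows "lo \<le> fst (bs_first P lo hi) \<and> (lo \<le> hi \<longrightarrow> fst (bs_first P lo hi) \<le> hi) \<and>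
         (\<forall>i. lo \<le> i \<and> i < hi \<longrightarrow> (P i \<longleftrightarrow> fst (bs_first P lo hi) \<le> i))"
  using assms
proof (induction P lo hi rule: bs_first.induct)
  case (1 P lo hi)
  show ?case
  proof (cases "lo < hi")
    case False
    then show ?thesis by (auto simp add: bs_first.simps)
  next
    case lt: True
    define mid where "mid = (lo+hi) div 2"
    have m: "lo \<le> mid" "mid < hi" using lt mid_def by auto
    show ?thesis
    proof (cases "P mid")
      case True
      have eq: "fst (bs_first P lo hi) = fst (bs_first P lo mid)"
        using lt True by (simp add: bs_first.simps[of P lo hi] mid_def Let_def split: prod.split)
      have mono: "\<And>i j. lo \<le> i \<Longrightarrow> i \<le> j \<Longrightarrow> j < mid \<Longrightarrow> P i \<Longrightarrow> P j"
        using 1(3) m(2) by (meson less_trans)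
      have IH: "lo \<le> fst (bs_first P lo mid) \<and> (lo \<le> mid \<longrightarrow> fst (bs_first P lo mid) \<le> mid) \<and>
         (\<forall>i. lo \<le> i \<and> i < mid \<longrightarrow> (P i \<longleftrightarrow> fst (bs_first P lo mid) \<le> i))"
        by (rule 1(1)[OF lt mid_def True mono])
      define r where "r = fst (bs_first P lo mid)"
      have r1: "lo \<le> r" "r \<le> mid" using IH m unfolding r_def by auto
      have r2: "\<And>i. lo \<le> i \<Longrightarrow> i < mid \<Longrightarrow> P i \<longleftrightarrow> r \<le> i" using IH unfolding r_def by auto
      have r3: "\<And>i. mid \<le> i \<Longrightarrow> i < hi \<Longrightarrow> P i" using 1(3)[OF m(1) _ _ True] by auto
      have "\<forall>i. lo \<le> i \<and> i < hi \<longrightarrow> (P i \<longleftrightarrow> r \<le> i)"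
      proof (intro allI impI)
        fix i assume i: "lo \<le> i \<and> i < hi"
        show "P i \<longleftrightarrow> r \<le> i"
        proof (cases "i < mid")
          case True thus ?thesis using r2 i by auto
        next
          case False thus ?thesis using r3 i r1 by auto
        qed
      qed
      then show ?thesis unfolding eq r_def[symmetric] using r1 m by auto
    next
      case False
      have eq: "fst (bs_first P lo hi) = fst (bs_first P (Suc mid) hi)"
        using lt False by (simp add: bs_first.simps[of P lo hi] mid_def Let_def split: prod.split)
      have mono: "\<And>i j. Suc mid \<le> i \<Longrightarrow> i \<le> j \<Longrightarrow> j < hi \<Longrightarrow> P i \<Longrightarrow> P j"
        using 1(3) m(1) by (meson Suc_leD le_trans)
      have IH: "Suc mid \<le> fst (bs_first P (Suc mid) hi) \<and> (Suc mid \<le> hi \<longrightarrow> fst (bs_first P (Suc mid) hi) \<le> hi) \<and>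
         (\<forall>i. Suc mid \<le> i \<and> i < hi \<longrightarrow> (P i \<longleftrightarrow> fst (bs_first P (Suc mid) hi) \<le> i))"
        by (rule 1(2)[OF lt mid_def False mono])
      define r where "r = fst (bs_first P (Suc mid) hi)"
      have r1: "Suc mid \<le> r" "r \<le> hi" using IH m unfolding r_def by auto
      have r2: "\<And>i. Suc mid \<le> i \<Longrightarrow> i < hi \<Longrightarrow> P i \<longleftrightarrow> r \<le> i" using IH unfolding r_def by auto
      have r3: "\<And>i. lo \<le> i \<Longrightarrow> i \<le> mid \<Longrightarrow> \<not> P i"
      proof
        fix i assume "lo \<le> i" "i \<le> mid" "P i"
        then have "P mid" using 1(3)[of i mid] m by auto
        thus False using False by simp
      qed
      have "\<forall>i. lo \<le> i \<and> i < hi \<longrightarrow> (P i \<longleftrightarrow> r \<le> i)"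
      proof (intro allI impI)
        fix i assume i: "lo \<le> i \<and> i < hi"
        show "P i \<longleftrightarrow> r \<le> i"
        proof (cases "i \<le> mid")
          case True thus ?thesis using r3 i r1 by auto
        next
          case False thus ?thesis using r2 i by auto
        qed
      qed
      then show ?thesis unfolding eq r_def[symmetric] using r1 m by auto
    qed
  qed
qed

lemma bs_first_cost: "2 ^ snd (bs_first P lo hi) \<le> max 1 (2 * (hi - lo))"
proof (induction P lo hi rule: bs_first.induct)
  case (1 P lo hi)
  show ?case
  proof (cases "lo < hi")
    case False
    then show ?thesis by (simp add: bs_first.simps)
  next
    case lt: True
    define mid where "mid = (lo+hi) div 2"
    show ?thesis
    proof (cases "P mid")
      case True
      have eq: "snd (bs_first P lo hi) = Suc (snd (bs_first P lo mid))"
        using lt True by (simp add: bs_first.simps[of P lo hi] mid_def Let_def split: prod.split)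
      have IH: "2 ^ snd (bs_first P lo mid) \<le> max 1 (2 * (mid - lo))"
        by (rule 1(1)[OF lt mid_def True])
      have "max 1 (2 * (mid - lo)) \<le> hi - lo" using lt mid_def by auto
      then have "2 ^ snd (bs_first P lo mid) \<le> hi - lo" using IH by linarith
      then show ?thesis unfolding eq by simp
    next
      case False
      have eq: "snd (bs_first P lo hi) = Suc (snd (bs_first P (Suc mid) hi))"
        using lt False by (simp add: bs_first.simps[of P lo hi] mid_def Let_def split: prod.split)
      have IH: "2 ^ snd (bs_first P (Suc mid) hi) \<le> max 1 (2 * (hi - Suc mid))"
        by (rule 1(2)[OF lt mid_def False])
      have "max 1 (2 * (hi - Suc mid)) \<le> hi - lo" using lt mid_def by auto
      then have "2 ^ snd (bs_first P (Suc mid) hi) \<le> hi - lo" using IH by linarith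
      then show ?thesis unfolding eq by simp
    qed
  qed
qed

lemma bs_first_cost_real:
  assumes "n \<ge> 1"
  shows "real (snd (bs_first P 0 n)) \<le> log 2 (real n) + 1"
proof -
  have "2 ^ snd (bs_first P 0 n) \<le> 2 * n" using bs_first_cost[of P 0 n] assms by simp
  hence "(2::real) ^ snd (bs_first P 0 n) \<le> 2 * real n"
    by (metis of_nat_le_iff of_nat_mult of_nat_numeral of_nat_power)
  hence "log 2 ((2::real) ^ snd (bs_first P 0 n)) \<le> log 2 (2 * real n)"
    using assms by (subst log_le_cancel_iff) auto
  thus ?thesis using assms by (simp add: log_mult)
qed

lemma sp_mono:
  assumes "sorted_pareto A" "i < j" "j < length A"
  shows "fst (A!i) < fst (A!j) \<and> snd (A!j) < snd (A!i)"
proof -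
  have lx: "lex_less (A!i) (A!j)" using assms unfolding sorted_pareto_def
    by (simp add: sorted_wrt_iff_nth_less)
  have inA: "A!i \<in> set A" "A!j \<in> set A" using assms by auto
  have nd: "\<not> dominates (A!i) (A!j)" using assms(1) inA unfolding sorted_pareto_def pareto_set_def by blast
  have f: "fst (A!i) < fst (A!j)"
  proof (rule ccontr)
    assume "\<not> ?thesis"
    with lx have "fst (A!i) = fst (A!j)" "snd (A!i) < snd (A!j)" unfolding lex_less_def by auto
    hence "dominates (A!i) (A!j)" unfolding dominates_def by auto
    with nd show False by simp
  qed
  have "snd (A!j) < snd (A!i)"
  proof (rule ccontr)
    assume "\<not> ?thesis"
    hence "dominates (A!i) (A!j)" using f unfolding dominates_def by auto
    with nd show False by simp
  qed
  with f show ?thesis by simp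
qed

lemma sp_mono_le:
  assumes "sorted_pareto A" "i \<le> j" "j < length A"
  shows "fst (A!i) \<le> fst (A!j) \<and> snd (A!j) \<le> snd (A!i)"
  using sp_mono[OF assms(1) _ assms(3), of i] assms(2) by (cases "i = j") auto

lemma lex_irrefl: "\<not> lex_less p p" unfolding lex_less_def by auto
lemma lex_trans: "lex_less p q \<Longrightarrow> lex_less q r \<Longrightarrow> lex_less p r" unfolding lex_less_def by auto
lemma lex_total: "p \<noteq> q \<Longrightarrow> lex_less p q \<or> lex_less q p"
  unfolding lex_less_def by (cases p; cases q) auto
lemma lex_le_dom: "fst p \<le> fst q \<Longrightarrow> snd p \<le> snd q \<Longrightarrow> p \<noteq> q \<Longrightarrow> lex_less p q"
  unfolding lex_less_def by (cases p; cases q) auto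

definition inR :: "real \<Rightarrow> real \<Rightarrow> real \<Rightarrow> real \<Rightarrow> point \<Rightarrow> bool" where
  "inR a b c d p \<longleftrightarrow> a \<le> fst p \<and> fst p < b \<and> c \<le> snd p \<and> snd p < d"

locale ctx =
  fixes A B :: "point list" and n :: nat
  assumes n1: "n \<ge> 1" and lA: "length A = n" and lB: "length B = n"
    and sA: "sorted_pareto A" and sB: "sorted_pareto B"
begin

abbreviation "E \<equiv> mink_entries A B"
abbreviation "PS \<equiv> pareto_sum A B"
abbreviation "M00 \<equiv> mink A B 0 0"
abbreviation "Mnn \<equiv> mink A B (n-1) (n-1)"
abbreviation "col j i \<equiv> mink A B i j"

lemma fst_mink: "fst (mink A B i j) = fst (A!i) + fst (B!j)" by (simp add: mink_def padd_def)
lemma snd_mink: "snd (mink A B i j) = snd (A!i) + snd (B!j)" by (simp add: mink_def padd_def)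

lemma col_strict: "i < i' \<Longrightarrow> i' < n \<Longrightarrow> fst (mink A B i j) < fst (mink A B i' j) \<and> snd (mink A B i' j) < snd (mink A B i j)"
  using sp_mono[OF sA, of i i'] lA by (simp add: fst_mink snd_mink)

lemma col_le: "i \<le> i' \<Longrightarrow> i' < n \<Longrightarrow> fst (mink A B i j) \<le> fst (mink A B i' j) \<and> snd (mink A B i' j) \<le> snd (mink A B i j)"
  using sp_mono_le[OF sA, of i i'] lA by (simp add: fst_mink snd_mink)

lemma E_iff: "e \<in> E \<longleftrightarrow> (\<exists>i j. i < n \<and> j < n \<and> e = mink A B i j)"
  unfolding mink_entries_def using lA lB by auto

lemma finE: "finite E"
proof -
  have "E \<subseteq> (\<lambda>(i,j). mink A B i j) ` ({..<n} \<times> {..<n})"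
  proof
    fix e assume "e \<in> E"
    then obtain i j where ij: "i < n" "j < n" "e = mink A B i j" unfolding E_iff by auto
    show "e \<in> (\<lambda>(i,j). mink A B i j) ` ({..<n} \<times> {..<n})"
      by (rule image_eqI[of _ _ "(i,j)"]) (use ij in auto)
  qed
  thus ?thesis by (rule finite_subset) simp
qed

lemma finP: "finite PS" using finE unfolding pareto_sum_def by simp

lemma A0: "i < n \<Longrightarrow> fst (A!0) \<le> fst (A!i) \<and> (0 < i \<longrightarrow> fst (A!0) < fst (A!i))"
  using sp_mono[OF sA, of 0 i] lA by (cases "i = 0") auto
lemma B0: "i < n \<Longrightarrow> fst (B!0) \<le> fst (B!i) \<and> (0 < i \<longrightarrow> fst (B!0) < fst (B!i))"
  using sp_mono[OF sB, of 0 i] lB by (cases "i = 0") auto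
lemma An: "i < n \<Longrightarrow> fst (A!i) \<le> fst (A!(n-1)) \<and> snd (A!(n-1)) \<le> snd (A!i) \<and>
   (i < n-1 \<longrightarrow> fst (A!i) < fst (A!(n-1)) \<and> snd (A!(n-1)) < snd (A!i))"
  using sp_mono[OF sA, of i "n-1"] sp_mono_le[OF sA, of i "n-1"] lA n1 by auto
lemma Bn: "i < n \<Longrightarrow> fst (B!i) \<le> fst (B!(n-1)) \<and> snd (B!(n-1)) \<le> snd (B!i) \<and>
   (i < n-1 \<longrightarrow> fst (B!i) < fst (B!(n-1)) \<and> snd (B!(n-1)) < snd (B!i))"
  using sp_mono[OF sB, of i "n-1"] sp_mono_le[OF sB, of i "n-1"] lB n1 by auto

lemma E_fst_min: "e \<in> E \<Longrightarrow> fst M00 \<le> fst e \<and> (fst e = fst M00 \<longrightarrow> e = M00)"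
proof -
  assume "e \<in> E"
  then obtain i j where ij: "i < n" "j < n" "e = mink A B i j" unfolding E_iff by auto
  have a: "fst (A!0) \<le> fst (A!i) \<and> (0 < i \<longrightarrow> fst (A!0) < fst (A!i))" using A0 ij by auto
  have b: "fst (B!0) \<le> fst (B!j) \<and> (0 < j \<longrightarrow> fst (B!0) < fst (B!j))" using B0 ij by auto
  show ?thesis using a b ij by (cases "i = 0"; cases "j = 0") (auto simp: fst_mink)
qed

lemma E_fst_max: "e \<in> E \<Longrightarrow> fst e \<le> fst Mnn \<and> (fst e = fst Mnn \<longrightarrow> e = Mnn)"
proof -
  assume "e \<in> E"
  then obtain i j where ij: "i < n" "j < n" "e = mink A B i j" unfolding E_iff by auto
  have a: "fst (A!i) \<le> fst (A!(n-1)) \<and> (i < n-1 \<longrightarrow> fst (A!i) < fst (A!(n-1)))" using An ij by auto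
  have b: "fst (B!j) \<le> fst (B!(n-1)) \<and> (j < n-1 \<longrightarrow> fst (B!j) < fst (B!(n-1)))" using Bn ij by auto
  show ?thesis using a b ij by (cases "i = n-1"; cases "j = n-1") (auto simp: fst_mink)
qed

lemma E_snd_min: "e \<in> E \<Longrightarrow> snd Mnn \<le> snd e \<and> (snd e = snd Mnn \<longrightarrow> e = Mnn)"
proof -
  assume "e \<in> E"
  then obtain i j where ij: "i < n" "j < n" "e = mink A B i j" unfolding E_iff by auto
  have a: "snd (A!(n-1)) \<le> snd (A!i) \<and> (i < n-1 \<longrightarrow> snd (A!(n-1)) < snd (A!i))" using An ij by auto
  have b: "snd (B!(n-1)) \<le> snd (B!j) \<and> (j < n-1 \<longrightarrow> snd (B!(n-1)) < snd (B!j))" using Bn ij by auto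
  show ?thesis using a b ij by (cases "i = n-1"; cases "j = n-1") (auto simp: snd_mink)
qed

lemma M00_E: "M00 \<in> E" unfolding E_iff using n1 by (intro exI[of _ 0]) auto
lemma Mnn_E: "Mnn \<in> E" unfolding E_iff using n1 by (intro exI[of _ "n-1"]) auto

lemma M00_P: "M00 \<in> PS"
  unfolding pareto_sum_def using M00_E E_fst_min unfolding dominates_def by force

lemma Mnn_P: "Mnn \<in> PS"
  unfolding pareto_sum_def using Mnn_E E_snd_min unfolding dominates_def by force

end


context ctx begin

lemma column_query_spec:
  assumes j: "j < n"
  shows "(fst (column_query A B a b c d j) = None \<longleftrightarrow> (\<forall>i<n. \<not> inR a b c d (mink A B i j))) \<and>
         (\<forall>p. fst (column_query A B a b c d j) = Some p \<longrightarrow>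
             inR a b c d p \<and> p \<in> E \<and> (\<forall>i<n. inR a b c d (mink A B i j) \<longrightarrow> \<not> lex_less (mink A B i j) p)) \<and>
         real (snd (column_query A B a b c d j)) \<le> 4 * (log 2 (real n) + 1) + 1"
proof -
  define P1 where "P1 = (\<lambda>i. fst (mink A B i j) \<ge> a)"
  define P2 where "P2 = (\<lambda>i. fst (mink A B i j) \<ge> b)"
  define P3 where "P3 = (\<lambda>i. snd (mink A B i j) < d)"
  define P4 where "P4 = (\<lambda>i. snd (mink A B i j) < c)"
  obtain fx c1 where e1: "bs_first P1 0 n = (fx, c1)" by (cases "bs_first P1 0 n") auto
  obtain ex c2 where e2: "bs_first P2 0 n = (ex, c2)" by (cases "bs_first P2 0 n") auto
  obtain fy c3 where e3: "bs_first P3 0 n = (fy, c3)" by (cases "bs_first P3 0 n") auto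
  obtain ey c4 where e4: "bs_first P4 0 n = (ey, c4)" by (cases "bs_first P4 0 n") auto
  have cq: "column_query A B a b c d j =
     (if max fx fy < min ex ey then Some (mink A B (max fx fy) j) else None, c1 + c2 + c3 + c4 + 1)"
    unfolding column_query_def Let_def using lA e1 e2 e3 e4 unfolding P1_def P2_def P3_def P4_def
    by simp
  have s1: "fx \<le> n \<and> (\<forall>i. i < n \<longrightarrow> (P1 i \<longleftrightarrow> fx \<le> i))"
    using bs_first_spec[of 0 n P1] e1 col_le unfolding P1_def by (smt (verit) fst_conv le0)
  have s2: "ex \<le> n \<and> (\<forall>i. i < n \<longrightarrow> (P2 i \<longleftrightarrow> ex \<le> i))"
    using bs_first_spec[of 0 n P2] e2 col_le unfolding P2_def by (smt (verit) fst_conv le0)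
  have s3: "fy \<le> n \<and> (\<forall>i. i < n \<longrightarrow> (P3 i \<longleftrightarrow> fy \<le> i))"
    using bs_first_spec[of 0 n P3] e3 col_le unfolding P3_def by (smt (verit) fst_conv le0)
  have s4: "ey \<le> n \<and> (\<forall>i. i < n \<longrightarrow> (P4 i \<longleftrightarrow> ey \<le> i))"
    using bs_first_spec[of 0 n P4] e4 col_le unfolding P4_def by (smt (verit) fst_conv le0)
  have inR_iff: "\<And>i. i < n \<Longrightarrow> inR a b c d (mink A B i j) \<longleftrightarrow> max fx fy \<le> i \<and> i < min ex ey"
  proof -
    fix i assume i: "i < n"
    have "inR a b c d (mink A B i j) \<longleftrightarrow> P1 i \<and> \<not> P2 i \<and> \<not> P4 i \<and> P3 i"
      unfolding inR_def P1_def P2_def P3_def P4_def by auto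
    also have "\<dots> \<longleftrightarrow> fx \<le> i \<and> \<not> ex \<le> i \<and> \<not> ey \<le> i \<and> fy \<le> i" using s1 s2 s3 s4 i by blast
    also have "\<dots> \<longleftrightarrow> max fx fy \<le> i \<and> i < min ex ey" by auto
    finally show "inR a b c d (mink A B i j) \<longleftrightarrow> max fx fy \<le> i \<and> i < min ex ey" .
  qed
  have cost: "real (c1 + c2 + c3 + c4 + 1) \<le> 4 * (log 2 (real n) + 1) + 1"
  proof -
    have "real c1 \<le> log 2 (real n) + 1" using bs_first_cost_real[OF n1, of P1] e1 by simp
    moreover have "real c2 \<le> log 2 (real n) + 1" using bs_first_cost_real[OF n1, of P2] e2 by simp
    moreover have "real c3 \<le> log 2 (real n) + 1" using bs_first_cost_real[OF n1, of P3] e3 by simp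
    moreover have "real c4 \<le> log 2 (real n) + 1" using bs_first_cost_real[OF n1, of P4] e4 by simp
    ultimately show ?thesis by simp
  qed
  show ?thesis
  proof (cases "max fx fy < min ex ey")
    case True
    define i0 where "i0 = max fx fy"
    have i0n: "i0 < n" using True s2 i0_def by auto
    have r: "fst (column_query A B a b c d j) = Some (mink A B i0 j)" using cq True i0_def by simp
    have in0: "inR a b c d (mink A B i0 j)" using inR_iff[OF i0n] True i0_def by simp
    have E0: "mink A B i0 j \<in> E" unfolding E_iff using i0n j by blast
    have minl: "\<forall>i<n. inR a b c d (mink A B i j) \<longrightarrow> \<not> lex_less (mink A B i j) (mink A B i0 j)"
    proof (intro allI impI)
      fix i assume i: "i < n" "inR a b c d (mink A B i j)"
      hence "i0 \<le> i" using inR_iff i0_def by auto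
      then show "\<not> lex_less (mink A B i j) (mink A B i0 j)"
      proof (cases "i0 = i")
        case True thus ?thesis using lex_irrefl by simp
      next
        case False
        hence "fst (mink A B i0 j) < fst (mink A B i j)" using col_strict[of i0 i j] \<open>i0 \<le> i\<close> i by auto
        thus ?thesis unfolding lex_less_def by auto
      qed
    qed
    have nn: "\<not> (\<forall>i<n. \<not> inR a b c d (mink A B i j))" using in0 i0n by blast
    show ?thesis using r in0 E0 minl nn cost cq by auto
  next
    case False
    have r: "fst (column_query A B a b c d j) = None" using cq False by simp
    have "\<forall>i<n. \<not> inR a b c d (mink A B i j)" using inR_iff False by auto
    then show ?thesis using r cost cq by auto
  qed
qed

end

lemma lex_min_opt_simps:
  "lex_min_opt None x = x" "lex_min_opt (Some p) None = Some p"
  "lex_min_opt (Some p) (Some q) = Some (if lex_less q p then q else p)"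
  unfolding lex_min_opt_def by auto

context ctx begin

definition rqf :: "real \<Rightarrow> real \<Rightarrow> real \<Rightarrow> real \<Rightarrow> point option \<times> nat \<Rightarrow> nat \<Rightarrow> point option \<times> nat" where
  "rqf a b c d = (\<lambda>(best, cc) j. let (cand, c') = column_query A B a b c d j
                          in (lex_min_opt best cand, cc + c' + 1))"

lemma rqf_eq: "rqf a b c d (r, cc) j =
   (lex_min_opt r (fst (column_query A B a b c d j)), cc + snd (column_query A B a b c d j) + 1)"
  unfolding rqf_def by (simp add: split_def Let_def)

lemma rq_prefix:
  assumes "J \<le> n"
  shows "(fst (foldl (rqf a b c d) (None, 0) [0..<J]) = None \<longleftrightarrow> (\<forall>i<n. \<forall>j<J. \<not> inR a b c d (mink A B i j))) \<and>
         (\<forall>p. fst (foldl (rqf a b c d) (None, 0) [0..<J]) = Some p \<longrightarrow>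
             inR a b c d p \<and> p \<in> E \<and> (\<forall>i<n. \<forall>j<J. inR a b c d (mink A B i j) \<longrightarrow> \<not> lex_less (mink A B i j) p)) \<and>
         real (snd (foldl (rqf a b c d) (None, 0) [0..<J])) \<le> real J * (4 * (log 2 (real n) + 1) + 2)"
  using assms
proof (induction J)
  case 0
  then show ?case by simp
next
  case (Suc J)
  obtain r cc where rc: "foldl (rqf a b c d) (None, 0) [0..<J] = (r, cc)" by (cases "foldl (rqf a b c d) (None, 0) [0..<J]") auto
  have IH: "(r = None \<longleftrightarrow> (\<forall>i<n. \<forall>j<J. \<not> inR a b c d (mink A B i j))) \<and>
         (\<forall>p. r = Some p \<longrightarrow>
             inR a b c d p \<and> p \<in> E \<and> (\<forall>i<n. \<forall>j<J. inR a b c d (mink A B i j) \<longrightarrow> \<not> lex_less (mink A B i j) p)) \<and>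
         real cc \<le> real J * (4 * (log 2 (real n) + 1) + 2)" using Suc rc by simp
  define cq where "cq = column_query A B a b c d J"
  have CQ: "(fst cq = None \<longleftrightarrow> (\<forall>i<n. \<not> inR a b c d (mink A B i J))) \<and>
         (\<forall>p. fst cq = Some p \<longrightarrow>
             inR a b c d p \<and> p \<in> E \<and> (\<forall>i<n. inR a b c d (mink A B i J) \<longrightarrow> \<not> lex_less (mink A B i J) p)) \<and>
         real (snd cq) \<le> 4 * (log 2 (real n) + 1) + 1"
    unfolding cq_def using column_query_spec[of J a b c d] Suc by simp
  have step: "foldl (rqf a b c d) (None, 0) [0..<Suc J] = (lex_min_opt r (fst cq), cc + snd cq + 1)"
    using rc by (simp add: rqf_eq cq_def)
  have lessJ: "\<And>j. j < Suc J \<longleftrightarrow> j < J \<or> j = J" by auto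
  have part1: "lex_min_opt r (fst cq) = None \<longleftrightarrow> (\<forall>i<n. \<forall>j<Suc J. \<not> inR a b c d (mink A B i j))"
  proof -
    have "lex_min_opt r (fst cq) = None \<longleftrightarrow> r = None \<and> fst cq = None"
      by (cases r; cases "fst cq") (auto simp: lex_min_opt_simps)
    thus ?thesis using IH CQ lessJ by auto
  qed
  have part2: "\<forall>p. lex_min_opt r (fst cq) = Some p \<longrightarrow>
             inR a b c d p \<and> p \<in> E \<and> (\<forall>i<n. \<forall>j<Suc J. inR a b c d (mink A B i j) \<longrightarrow> \<not> lex_less (mink A B i j) p)"
  proof (intro allI impI)
    fix p assume pe: "lex_min_opt r (fst cq) = Some p"
    show "inR a b c d p \<and> p \<in> E \<and> (\<forall>i<n. \<forall>j<Suc J. inR a b c d (mink A B i j) \<longrightarrow> \<not> lex_less (mink A B i j) p)"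
    proof (cases r)
      case None
      then have "fst cq = Some p" using pe by (simp add: lex_min_opt_simps)
      moreover have "\<forall>i<n. \<forall>j<J. \<not> inR a b c d (mink A B i j)" using IH None by simp
      ultimately show ?thesis using CQ lessJ by blast
    next
      case (Some p0)
      note P0 = IH[THEN conjunct2, THEN conjunct1, rule_format, OF Some]
      show ?thesis
      proof (cases "fst cq")
        case None
        then have "p = p0" using pe Some by (simp add: lex_min_opt_simps)
        moreover have "\<forall>i<n. \<not> inR a b c d (mink A B i J)" using CQ None by simp
        ultimately show ?thesis using P0 lessJ by blast
      next
        case (Some q)
        note Q = CQ[THEN conjunct2, THEN conjunct1, rule_format, OF Some]
        have pp: "p = (if lex_less q p0 then q else p0)" using pe \<open>r = Some p0\<close> Some by (simp add: lex_min_opt_simps)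
        show ?thesis
        proof (cases "lex_less q p0")
          case True
          hence "p = q" using pp by simp
          have "\<forall>i<n. \<forall>j<Suc J. inR a b c d (mink A B i j) \<longrightarrow> \<not> lex_less (mink A B i j) q"
            using P0 Q True lessJ lex_trans by metis
          thus ?thesis using Q \<open>p = q\<close> by simp
        next
          case False
          hence "p = p0" using pp by simp
          have "\<forall>i<n. \<forall>j<Suc J. inR a b c d (mink A B i j) \<longrightarrow> \<not> lex_less (mink A B i j) p0"
          proof (intro allI impI)
            fix i j assume ij: "i < n" "j < Suc J" "inR a b c d (mink A B i j)"
            show "\<not> lex_less (mink A B i j) p0"
            proof (cases "j = J")
              case True
              have nq: "\<not> lex_less (mink A B i J) q" using Q ij True by blast
              show ?thesis
              proof
                assume l: "lex_less (mink A B i j) p0"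
                have "p0 = q \<or> lex_less p0 q" using False lex_total by blast
                hence "lex_less (mink A B i J) q" using l True lex_trans by blast
                with nq show False by simp
              qed
            next
              case False
              thus ?thesis using P0 ij by auto
            qed
          qed
          thus ?thesis using P0 \<open>p = p0\<close> by simp
        qed
      qed
    qed
  qed
  have part3: "real (cc + snd cq + 1) \<le> real (Suc J) * (4 * (log 2 (real n) + 1) + 2)"
    using IH CQ by (simp add: algebra_simps)
  show ?case unfolding step using part1 part2 part3 by simp
qed

lemma range_min_query_spec:
  "(fst (range_min_query A B a b c d) = None \<longleftrightarrow> (\<forall>e\<in>E. \<not> inR a b c d e)) \<and>
   (\<forall>p. fst (range_min_query A B a b c d) = Some p \<longrightarrow>
       inR a b c d p \<and> p \<in> E \<and> (\<forall>e\<in>E. inR a b c d e \<longrightarrow> \<not> lex_less e p)) \<and>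
   real (snd (range_min_query A B a b c d)) \<le> real n * (4 * (log 2 (real n) + 1) + 2)"
proof -
  have eq: "range_min_query A B a b c d = foldl (rqf a b c d) (None, 0) [0..<n]"
    unfolding range_min_query_def rqf_def using lB by simp
  have Eall: "\<And>Q. (\<forall>e\<in>E. Q e) \<longleftrightarrow> (\<forall>i<n. \<forall>j<n. Q (mink A B i j))"
  proof -
    fix Q :: "point \<Rightarrow> bool"
    have mE: "\<And>i j. i < n \<Longrightarrow> j < n \<Longrightarrow> mink A B i j \<in> E" unfolding E_iff by blast
    show "(\<forall>e\<in>E. Q e) \<longleftrightarrow> (\<forall>i<n. \<forall>j<n. Q (mink A B i j))"
      using mE E_iff by metis
  qed
  show ?thesis unfolding eq using rq_prefix[of n a b c d] Eall by simp
qed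

end

context ctx begin

definition Qc :: real where "Qc = real n * (4 * (log 2 (real n) + 1) + 2) + 1"

lemma log_nn: "0 \<le> log 2 (real n)" using n1 by simp

lemma Qc_nn: "0 \<le> Qc" unfolding Qc_def using log_nn by simp

definition Inv :: "nat \<Rightarrow> sbs_state \<Rightarrow> bool" where
 "Inv t s \<longleftrightarrow> (\<exists>rest. out s = M00 # Mnn # rest \<and> distinct rest \<and> set rest \<subseteq> PS \<and>
       (\<forall>r\<in>set rest. fst M00 < fst r \<and> fst r \<le> cur_xmin s) \<and> (\<not> halted s \<longrightarrow> length rest = t)) \<and>
    fst M00 \<le> cur_xmin s \<and> (cur_xmin s, cur_ymax s) \<in> PS \<and>
    (\<forall>q\<in>PS. fst q \<le> cur_xmin s \<longrightarrow> q \<in> set (out s)) \<and>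
    (\<forall>e\<in>E. cur_xmin s \<le> fst e \<or> cur_ymax s \<le> snd e) \<and>
    (halted s \<longrightarrow> set (out s) = PS) \<and> real (time s) \<le> 1 + real t * Qc"

lemma PS_E: "q \<in> PS \<Longrightarrow> q \<in> E" unfolding pareto_sum_def by simp
lemma PS_nd: "q \<in> PS \<Longrightarrow> e \<in> E \<Longrightarrow> \<not> dominates e q" unfolding pareto_sum_def by simp

lemma Inv_init: "Inv 0 (sbs_init A B)"
proof -
  have s: "out (sbs_init A B) = [M00, Mnn]" "cur_xmin (sbs_init A B) = fst M00"
    "cur_ymax (sbs_init A B) = snd M00" "halted (sbs_init A B) = False" "time (sbs_init A B) = 1"
    unfolding sbs_init_def Let_def using lA lB by auto
  have "(fst M00, snd M00) \<in> PS" using M00_P by simp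
  moreover have "\<forall>q\<in>PS. fst q \<le> fst M00 \<longrightarrow> q \<in> set [M00, Mnn]"
    using E_fst_min PS_E by force
  moreover have "\<forall>e\<in>E. fst M00 \<le> fst e \<or> snd M00 \<le> snd e" using E_fst_min by blast
  ultimately show ?thesis unfolding Inv_def s by auto
qed

lemma step_eq:
  assumes "\<not> halted s"
  shows "sbs_step A B s =
    (case fst (range_min_query A B (cur_xmin s) (fst Mnn) (snd Mnn) (cur_ymax s)) of
       None \<Rightarrow> s\<lparr> halted := True, time := time s + snd (range_min_query A B (cur_xmin s) (fst Mnn) (snd Mnn) (cur_ymax s)) + 1 \<rparr>
     | Some m \<Rightarrow> s\<lparr> out := out s @ [m], cur_xmin := fst m, cur_ymax := snd m,
                    time := time s + snd (range_min_query A B (cur_xmin s) (fst Mnn) (snd Mnn) (cur_ymax s)) + 1 \<rparr>)"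
  using assms lA lB unfolding sbs_step_def Let_def by (simp add: split_def split: option.split)

lemma Inv_step:
  assumes I: "Inv t s"
  shows "Inv (Suc t) (sbs_step A B s)"
proof (cases "halted s")
  case True
  hence eq: "sbs_step A B s = s" unfolding sbs_step_def by simp
  have "real t * Qc \<le> real (Suc t) * Qc" using Qc_nn by (simp add: mult_right_mono)
  then show ?thesis using I True unfolding eq Inv_def by auto
next
  case nh: False
  define xmin where "xmin = cur_xmin s"
  define ymax where "ymax = cur_ymax s"
  define rq where "rq = range_min_query A B xmin (fst Mnn) (snd Mnn) ymax"
  note RQ = range_min_query_spec[of xmin "fst Mnn" "snd Mnn" ymax, folded rq_def]
  have seq: "sbs_step A B s = (case fst rq of
       None \<Rightarrow> s\<lparr> halted := True, time := time s + snd rq + 1 \<rparr>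
     | Some m \<Rightarrow> s\<lparr> out := out s @ [m], cur_xmin := fst m, cur_ymax := snd m,
                    time := time s + snd rq + 1 \<rparr>)"
    using step_eq[OF nh] unfolding rq_def xmin_def ymax_def .
  obtain rest where R: "out s = M00 # Mnn # rest" "distinct rest" "set rest \<subseteq> PS"
      "\<forall>r\<in>set rest. fst M00 < fst r \<and> fst r \<le> xmin" "length rest = t"
    using I nh unfolding Inv_def xmin_def by auto
  have I1: "fst M00 \<le> xmin" "(xmin, ymax) \<in> PS" "\<forall>q\<in>PS. fst q \<le> xmin \<longrightarrow> q \<in> set (out s)"
    "\<forall>e\<in>E. xmin \<le> fst e \<or> ymax \<le> snd e" "real (time s) \<le> 1 + real t * Qc"
    using I unfolding Inv_def xmin_def ymax_def by auto
  have pE: "(xmin, ymax) \<in> E" using PS_E I1(2) .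
  have cost: "real (time s + snd rq + 1) \<le> 1 + real (Suc t) * Qc"
    using RQ I1(5) unfolding Qc_def by (simp add: algebra_simps)
  show ?thesis
  proof (cases "fst rq")
    case None
    hence noR: "\<forall>e\<in>E. \<not> inR xmin (fst Mnn) (snd Mnn) ymax e" using RQ by simp
    have sub1: "set (out s) \<subseteq> PS" using R M00_P Mnn_P by auto
    have sub2: "PS \<subseteq> set (out s)"
    proof
      fix q assume q: "q \<in> PS"
      have qE: "q \<in> E" using PS_E q .
      show "q \<in> set (out s)"
      proof (cases "fst q \<le> xmin")
        case True thus ?thesis using I1(3) q by blast
      next
        case F1: False
        show ?thesis
        proof (cases "fst q < fst Mnn")
          case False
          hence "q = Mnn" using E_fst_max[OF qE] by auto
          thus ?thesis using R by simp
        next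
          case True
          have "snd Mnn \<le> snd q" using E_snd_min[OF qE] by simp
          hence "ymax \<le> snd q" using noR qE True F1 unfolding inR_def by auto
          hence "dominates (xmin, ymax) q" using F1 unfolding dominates_def by auto
          thus ?thesis using PS_nd[OF q pE] by simp
        qed
      qed
    qed
    have eq: "sbs_step A B s = s\<lparr> halted := True, time := time s + snd rq + 1 \<rparr>" using seq None by simp
    show ?thesis unfolding eq Inv_def using R I1 sub1 sub2 cost unfolding xmin_def ymax_def by auto
  next
    case (Some m)
    have M: "inR xmin (fst Mnn) (snd Mnn) ymax m" "m \<in> E" "\<forall>e\<in>E. inR xmin (fst Mnn) (snd Mnn) ymax e \<longrightarrow> \<not> lex_less e m"
      using RQ Some by auto
    have gt: "xmin < fst m"
    proof (rule ccontr)
      assume "\<not> ?thesis"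
      hence "fst m = xmin" "snd m < ymax" using M(1) unfolding inR_def by auto
      hence "dominates m (xmin, ymax)" unfolding dominates_def by (cases m) auto
      thus False using PS_nd[OF I1(2) M(2)] by simp
    qed
    have mP: "m \<in> PS"
    proof -
      have "\<not> dominates m' m" if m': "m' \<in> E" for m'
      proof
        assume d: "dominates m' m"
        hence "snd m' < ymax" "fst m' < fst Mnn" using M(1) unfolding dominates_def inR_def by auto
        hence "xmin \<le> fst m'" using I1(4) m' by force
        moreover have "snd Mnn \<le> snd m'" using E_snd_min[OF m'] by simp
        ultimately have "inR xmin (fst Mnn) (snd Mnn) ymax m'" using \<open>snd m' < ymax\<close> \<open>fst m' < fst Mnn\<close>
          unfolding inR_def by auto
        moreover have "lex_less m' m" using d lex_le_dom unfolding dominates_def by auto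
        ultimately show False using M(3) m' by blast
      qed
      thus ?thesis using M(2) unfolding pareto_sum_def by auto
    qed
    have I3: "\<forall>q\<in>PS. fst q \<le> fst m \<longrightarrow> q \<in> set (out s @ [m])"
    proof (intro ballI impI)
      fix q assume q: "q \<in> PS" "fst q \<le> fst m"
      have qE: "q \<in> E" using PS_E q(1) .
      show "q \<in> set (out s @ [m])"
      proof (cases "fst q \<le> xmin")
        case True thus ?thesis using I1(3) q by auto
      next
        case F1: False
        show ?thesis
        proof (cases "snd q < ymax")
          case True
          have "inR xmin (fst Mnn) (snd Mnn) ymax q"
            using True F1 q(2) M(1) E_snd_min[OF qE] unfolding inR_def by auto
          hence nl: "\<not> lex_less q m" using M(3) qE by blast
          show ?thesis
          proof (rule ccontr)
            assume "\<not> ?thesis"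
            hence "q \<noteq> m" by auto
            hence "lex_less m q" using nl lex_total by blast
            hence "dominates m q" using q(2) \<open>q \<noteq> m\<close> unfolding lex_less_def dominates_def by auto
            thus False using PS_nd[OF q(1) M(2)] by simp
          qed
        next
          case False
          hence "dominates (xmin, ymax) q" using F1 unfolding dominates_def by auto
          thus ?thesis using PS_nd[OF q(1) pE] by simp
        qed
      qed
    qed
    have I4: "\<forall>e\<in>E. fst m \<le> fst e \<or> snd m \<le> snd e"
    proof (rule ccontr)
      assume "\<not> ?thesis"
      then obtain e where e: "e \<in> E" "fst e < fst m" "snd e < snd m" by force
      hence "snd e < ymax" using M(1) unfolding inR_def by auto
      hence "xmin \<le> fst e" using I1(4) e(1) by force
      hence "inR xmin (fst Mnn) (snd Mnn) ymax e" using e M(1) E_snd_min[OF e(1)] unfolding inR_def by auto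
      moreover have "lex_less e m" using e unfolding lex_less_def by auto
      ultimately show False using M(3) e(1) by blast
    qed
    have mrest: "m \<notin> set rest" using R(4) gt by force
    have R': "out s @ [m] = M00 # Mnn # (rest @ [m])" "distinct (rest @ [m])" "set (rest @ [m]) \<subseteq> PS"
      "\<forall>r\<in>set (rest @ [m]). fst M00 < fst r \<and> fst r \<le> fst m" "length (rest @ [m]) = Suc t"
      using R mrest mP gt I1(1) by auto
    have eq: "sbs_step A B s = s\<lparr> out := out s @ [m], cur_xmin := fst m, cur_ymax := snd m,
                    time := time s + snd rq + 1 \<rparr>" using seq Some by simp
    have "fst M00 \<le> fst m" using gt I1(1) by simp
    moreover have "(fst m, snd m) \<in> PS" using mP by simp
    ultimately show ?thesis unfolding eq Inv_def using R' I3 I4 cost nh by auto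
  qed
qed

lemma Inv_run: "Inv t (sbs_run A B t)"
proof (induction t)
  case 0
  then show ?case using Inv_init unfolding sbs_run_def by simp
next
  case (Suc t)
  have "sbs_run A B (Suc t) = sbs_step A B (sbs_run A B t)" unfolding sbs_run_def by simp
  then show ?case using Inv_step[OF Suc] by simp
qed

lemma Inv_card:
  assumes "Inv t s"
  shows "length (out s) \<le> card PS + 1 \<and> (\<not> halted s \<longrightarrow> t + 1 \<le> card PS)"
proof -
  obtain rest where R: "out s = M00 # Mnn # rest" "distinct rest" "set rest \<subseteq> PS"
       "\<forall>r\<in>set rest. fst M00 < fst r" "\<not> halted s \<longrightarrow> length rest = t"
    using assms unfolding Inv_def by auto
  have "M00 \<notin> set rest" using R(4) by force
  hence "card (insert M00 (set rest)) = Suc (length rest)" using R(2) by (simp add: distinct_card)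
  moreover have "card (insert M00 (set rest)) \<le> card PS"
    using R(3) M00_P finP by (intro card_mono) auto
  ultimately show ?thesis using R by auto
qed

end

lemma arith_bound:
  fixes n k L :: real
  assumes "n \<ge> 1" "k \<ge> 1" "L \<ge> 1"
  shows "1 + k * (n * (4 * L + 2) + 1) \<le> 20 * (n * k * L)"
proof -
  have x1: "1 \<le> n * k" using mult_mono[of 1 n 1 k] assms by simp
  have x2: "n * k \<le> n * k * L" using mult_left_mono[of 1 L "n*k"] x1 assms by simp
  have x3: "k \<le> n * k" using mult_right_mono[of 1 n k] assms by simp
  have e: "k * (n * (4 * L + 2) + 1) = 4 * (n * k * L) + 2 * (n * k) + k" by (simp add: algebra_simps)
  show ?thesis unfolding e using x1 x2 x3 by linarith
qed

theorem mainTheorem7: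
  shows "\<exists>c::real. c > 0 \<and>
    (\<forall>(A::point list) (B::point list) (n::nat).
       n \<ge> 1 \<and> length A = n \<and> length B = n \<and> sorted_pareto A \<and> sorted_pareto B \<longrightarrow>
       (let k = card (pareto_sum A B) in
        \<exists>t. halted (sbs_run A B t) \<and>
            set (out (sbs_run A B t)) = pareto_sum A B \<and>
            real (time (sbs_run A B t)) \<le> c * (real n * real k * (log 2 (real n) + 1)) \<and>
            (\<forall>s\<le>t. real (sbs_space A B (sbs_run A B s)) \<le> c * (real n + real k))))"
proof (intro exI[of _ 20] conjI allI impI)
  show "(0::real) < 20" by simp
  fix A B :: "point list" and n :: nat
  assume H: "n \<ge> 1 \<and> length A = n \<and> length B = n \<and> sorted_pareto A \<and> sorted_pareto B"
  interpret ctx A B n using H by unfold_locales auto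
  define k where "k = card (pareto_sum A B)"
  have k1: "1 \<le> k" unfolding k_def using M00_P finP by (metis One_nat_def Suc_leI card_gt_0_iff empty_iff)
  have I: "Inv k (sbs_run A B k)" by (rule Inv_run)
  have hal: "halted (sbs_run A B k)" using Inv_card[OF I] unfolding k_def by auto
  have so: "set (out (sbs_run A B k)) = pareto_sum A B" using I hal unfolding Inv_def by auto
  have tm: "real (time (sbs_run A B k)) \<le> 1 + real k * Qc" using I unfolding Inv_def by auto
  have "1 + real k * Qc \<le> 20 * (real n * real k * (log 2 (real n) + 1))"
    unfolding Qc_def using arith_bound[of "real n" "real k" "log 2 (real n) + 1"] n1 k1 log_nn by simp
  with tm have tm2: "real (time (sbs_run A B k)) \<le> 20 * (real n * real k * (log 2 (real n) + 1))" by linarith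
  have sp: "\<forall>s\<le>k. real (sbs_space A B (sbs_run A B s)) \<le> 20 * (real n + real k)"
  proof (intro allI impI)
    fix s assume "s \<le> k"
    have "length (out (sbs_run A B s)) \<le> k + 1" using Inv_card[OF Inv_run[of s]] unfolding k_def by simp
    hence "sbs_space A B (sbs_run A B s) \<le> 2 * n + k + 17" unfolding sbs_space_def using lA lB by simp
    hence "real (sbs_space A B (sbs_run A B s)) \<le> 2 * real n + real k + 17" by linarith
    thus "real (sbs_space A B (sbs_run A B s)) \<le> 20 * (real n + real k)" using n1 k1 of_nat_le_iff[of 1 n] of_nat_le_iff[of 1 k] by simp
  qed
  show "let k = card (pareto_sum A B) in
        \<exists>t. halted (sbs_run A B t) \<and>
            set (out (sbs_run A B t)) = pareto_sum A B \<and>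
            real (time (sbs_run A B t)) \<le> 20 * (real n * real k * (log 2 (real n) + 1)) \<and>
            (\<forall>s\<le>t. real (sbs_space A B (sbs_run A B s)) \<le> 20 * (real n + real k))"
    unfolding Let_def k_def[symmetric] using hal so tm2 sp by blast
qed

end
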